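(* Let $(b,c)$ be a locally finite, connected graph over a countable set $X$ on which $\mathbb{Z}^d$ acts freely and cocompactly such that $H_{b,c}$ is $\mathbb{Z}^d$-invariant, and fix $x_0\in X$. Let $\Lambda:\mathbb{R}^d\to(-\infty,\lambda_0]$ be the map sending $\alpha$ to the unique $\lambda$ with $\rho^{-1}(\alpha)\in\mathcal{M}_\lambda$. Then $\Lambda$ is strictly concave and continuous.
   Context: A graph over $X$ is $(b,c)$ with $b:X\times X\to[0,\infty)$, $c:X\to\mathbb{R}$, $\sum_yb(x,y)<\infty$ ($b$ need not be symmetric); locally finite and connected as usual ($x\sim y$ iff $b(x,y)>0$). $H_{b,c}f(x)=\sum_yb(x,y)(f(x)-f(y))+c(x)f(x)$ on $\mathrm{Dom}(H)=\{f:\sum_yb(x,y)|f(y)|<\infty\ \forall x\}$; $f$ is $\lambda$-harmonic if $(H-\lambda)f=0$. $T_gf(x)=f(g^{-1}x)$; $H$ is $\mathbb{Z}^d$-invariant if $T_g$ preserves $\mathrm{Dom}(H)$ and $HT_g=T_gH$. $f$ is multiplicative with character $\gamma_f$ if $\gamma_f:\mathbb{Z}^d\to(0,\infty)$ is a homomorphism with $f(zx)=\gamma_f(z)f(x)$. $\mathcal{K}_\lambda$ is the pointwise closure of $\{f\ge0,\ f\not\equiv0,\ \lambda\text{-harmonic},\ f(x_0)=1\}$, $\mathcal{M}_\lambda$ its multiplicative elements (the $\mathcal{M}_\lambda$ are pairwise disjoint), $\mathcal{M}_\mathbb{R}=\bigcup_\lambda\mathcal{M}_\lambda$. $\rho:\mathcal{M}_\mathbb{R}\to\mathbb{R}^d$,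 $\rho(f)=\alpha$ where $\log\gamma_f(z)=\langle\alpha,z\rangle$; $\rho$ is a bijection. $\lambda_0=\sup\{\lambda:\mathcal{M}_\lambda\neq\emptyset\}$. *)

theory Defs
  imports "HOL-Analysis.Analysis"
begin

definition graph :: "('x \<Rightarrow> 'x \<Rightarrow> real) \<Rightarrow> bool" where
  "graph b \<longleftrightarrow> (\<forall>x y. b x y \<ge> 0) \<and> (\<forall>x. (\<lambda>y. b x y) summable_on UNIV)"

definition locally_finite :: "('x \<Rightarrow> 'x \<Rightarrow> real) \<Rightarrow> bool" where
  "locally_finite b \<longleftrightarrow> (\<forall>x. finite {y. b x y > 0})"

definition graph_connected :: "('x \<Rightarrow> 'x \<Rightarrow> real) \<Rightarrow> bool" where
  "graph_connected b \<longleftrightarrow> (\<forall>x y. (\<lambda>u v. b u v > 0)\<^sup>*\<^sup>* x y)"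

definition domH :: "('x \<Rightarrow> 'x \<Rightarrow> real) \<Rightarrow> ('x \<Rightarrow> real) set" where
  "domH b = {f. \<forall>x. (\<lambda>y. b x y * \<bar>f y\<bar>) summable_on UNIV}"

definition opH :: "('x \<Rightarrow> 'x \<Rightarrow> real) \<Rightarrow> ('x \<Rightarrow> real) \<Rightarrow> ('x \<Rightarrow> real) \<Rightarrow> 'x \<Rightarrow> real" where
  "opH b c f x = (\<Sum>\<^sub>\<infinity>y. b x y * (f x - f y)) + c x * f x"

definition harmonic :: "('x \<Rightarrow> 'x \<Rightarrow> real) \<Rightarrow> ('x \<Rightarrow> real) \<Rightarrow> real \<Rightarrow> ('x \<Rightarrow> real) \<Rightarrow> bool" where
  "harmonic b c lam f \<longleftrightarrow> f \<in> domH b \<and> (\<forall>x. opH b c f x - lam * f x = 0)"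

definition group_action :: "(int ^ 'd \<Rightarrow> 'x \<Rightarrow> 'x) \<Rightarrow> bool" where
  "group_action act \<longleftrightarrow> (\<forall>x. act 0 x = x) \<and> (\<forall>g h x. act (g + h) x = act g (act h x))"

definition free_action :: "(int ^ 'd \<Rightarrow> 'x \<Rightarrow> 'x) \<Rightarrow> bool" where
  "free_action act \<longleftrightarrow> (\<forall>g x. act g x = x \<longrightarrow> g = 0)"

definition cocompact_action :: "(int ^ 'd \<Rightarrow> 'x \<Rightarrow> 'x) \<Rightarrow> bool" where
  "cocompact_action act \<longleftrightarrow> finite ((\<lambda>x. range (\<lambda>g. act g x)) ` UNIV)"

definition transl :: "(int ^ 'd \<Rightarrow> 'x \<Rightarrow> 'x) \<Rightarrow> int ^ 'd \<Rightarrow> ('x \<Rightarrow> real) \<Rightarrow> 'x \<Rightarrow> real" where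
  "transl act g f x = f (act (- g) x)"

definition H_invariant :: "('x \<Rightarrow> 'x \<Rightarrow> real) \<Rightarrow> ('x \<Rightarrow> real) \<Rightarrow> (int ^ 'd \<Rightarrow> 'x \<Rightarrow> 'x) \<Rightarrow> bool" where
  "H_invariant b c act \<longleftrightarrow>
     (\<forall>g. \<forall>f \<in> domH b. transl act g f \<in> domH b \<and> opH b c (transl act g f) = transl act g (opH b c f))"

text \<open>The cone K_lambda (pointwise = product-topology closure) and multiplicative elements.\<close>

definition Kset :: "('x \<Rightarrow> 'x \<Rightarrow> real) \<Rightarrow> ('x \<Rightarrow> real) \<Rightarrow> 'x \<Rightarrow> real \<Rightarrow> ('x \<Rightarrow> real) set" where
  "Kset b c x0 lam = closure {f. (\<forall>x. f x \<ge> 0) \<and> f \<noteq> (\<lambda>_. 0) \<and> harmonic b c lam f \<and> f x0 = 1}"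

definition is_character :: "(int ^ 'd \<Rightarrow> real) \<Rightarrow> bool" where
  "is_character \<gamma> \<longleftrightarrow> (\<forall>z. \<gamma> z > 0) \<and> (\<forall>z w. \<gamma> (z + w) = \<gamma> z * \<gamma> w)"

definition mult_with :: "(int ^ 'd \<Rightarrow> 'x \<Rightarrow> 'x) \<Rightarrow> (int ^ 'd \<Rightarrow> real) \<Rightarrow> ('x \<Rightarrow> real) \<Rightarrow> bool" where
  "mult_with act \<gamma> f \<longleftrightarrow> is_character \<gamma> \<and> (\<forall>z x. f (act z x) = \<gamma> z * f x)"

definition multiplicative :: "(int ^ 'd \<Rightarrow> 'x \<Rightarrow> 'x) \<Rightarrow> ('x \<Rightarrow> real) \<Rightarrow> bool" where
  "multiplicative act f \<longleftrightarrow> (\<exists>\<gamma>. mult_with act \<gamma> f)"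

definition char_of :: "(int ^ 'd \<Rightarrow> 'x \<Rightarrow> 'x) \<Rightarrow> ('x \<Rightarrow> real) \<Rightarrow> int ^ 'd \<Rightarrow> real" where
  "char_of act f = (THE \<gamma>. mult_with act \<gamma> f)"

definition Mset :: "('x \<Rightarrow> 'x \<Rightarrow> real) \<Rightarrow> ('x \<Rightarrow> real) \<Rightarrow> (int ^ 'd \<Rightarrow> 'x \<Rightarrow> 'x) \<Rightarrow> 'x \<Rightarrow> real \<Rightarrow> ('x \<Rightarrow> real) set" where
  "Mset b c act x0 lam = {f \<in> Kset b c x0 lam. multiplicative act f}"

definition pair_Zd :: "real ^ 'd \<Rightarrow> int ^ 'd \<Rightarrow> real" where
  "pair_Zd \<alpha> z = (\<Sum>i\<in>UNIV. \<alpha> $ i * real_of_int (z $ i))"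

definition rho :: "(int ^ 'd \<Rightarrow> 'x \<Rightarrow> 'x) \<Rightarrow> ('x \<Rightarrow> real) \<Rightarrow> real ^ 'd" where
  "rho act f = (THE \<alpha>. \<forall>z. ln (char_of act f z) = pair_Zd \<alpha> z)"

definition Lam :: "('x \<Rightarrow> 'x \<Rightarrow> real) \<Rightarrow> ('x \<Rightarrow> real) \<Rightarrow> (int ^ 'd \<Rightarrow> 'x \<Rightarrow> 'x) \<Rightarrow> 'x \<Rightarrow> real ^ 'd \<Rightarrow> real" where
  "Lam b c act x0 \<alpha> = (THE lam. \<exists>f \<in> Mset b c act x0 lam. rho act f = \<alpha>)"

definition strictly_concave_on :: "'a::real_vector set \<Rightarrow> ('a \<Rightarrow> real) \<Rightarrow> bool" where
  "strictly_concave_on S F \<longleftrightarrow>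
     (\<forall>x\<in>S. \<forall>y\<in>S. \<forall>t::real. x \<noteq> y \<and> 0 < t \<and> t < 1 \<longrightarrow>
        F ((1 - t) *\<^sub>R x + t *\<^sub>R y) > (1 - t) * F x + t * F y)"

end

theory Submission
  imports Defs
begin


locale setting =
  fixes b :: "'x::countable \<Rightarrow> 'x \<Rightarrow> real" and c :: "'x \<Rightarrow> real"
    and act :: "int ^ 'd \<Rightarrow> 'x \<Rightarrow> 'x" and x0 :: 'x
  assumes gr: "graph b" and lf: "locally_finite b" and conn: "graph_connected b"
    and ga: "group_action act" and fr: "free_action act" and cc: "cocompact_action act"
    and hi: "H_invariant b c act"
begin

definition N :: "'x \<Rightarrow> 'x set" where "N x = {y. y \<noteq> x \<and> 0 < b x y}"
definition V :: "'x \<Rightarrow> real" where "V x = (\<Sum>y\<in>N x. b x y) + c x"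

lemma bnn: "0 \<le> b x y" using gr by (auto simp: graph_def)

lemma finN: "finite (N x)"
proof -
  have "finite {y. 0 < b x y}" using lf by (auto simp: locally_finite_def)
  then show ?thesis unfolding N_def by (rule rev_finite_subset) auto
qed

lemma b_notN: "y \<notin> N x \<Longrightarrow> y \<noteq> x \<Longrightarrow> b x y = 0"
  using bnn[of x y] by (auto simp: N_def)

lemma opH_eq: "opH b c f x = V x * f x - (\<Sum>y\<in>N x. b x y * f y)"
proof -
  have "(\<Sum>\<^sub>\<infinity>y. b x y * (f x - f y)) = (\<Sum>\<^sub>\<infinity>y\<in>N x. b x y * (f x - f y))"
    by (rule infsum_cong_neutral) (use b_notN in fastforce)+
  also have "\<dots> = (\<Sum>y\<in>N x. b x y * (f x - f y))" using finN by simp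
  also have "\<dots> = (\<Sum>y\<in>N x. b x y) * f x - (\<Sum>y\<in>N x. b x y * f y)"
    by (simp add: right_diff_distrib sum_subtractf sum_distrib_right)
  finally show ?thesis by (simp add: opH_def V_def algebra_simps)
qed

lemma domH_all: "f \<in> domH b"
  unfolding domH_def
proof (intro CollectI allI)
  fix x
  have "(\<lambda>y. b x y * \<bar>f y\<bar>) summable_on UNIV \<longleftrightarrow> (\<lambda>y. b x y * \<bar>f y\<bar>) summable_on (insert x (N x))"
    by (rule summable_on_cong_neutral) (auto simp: b_notN)
  then show "(\<lambda>y. b x y * \<bar>f y\<bar>) summable_on UNIV" using finN by simp
qed

lemma act0: "act 0 x = x" using ga by (simp add: group_action_def)
lemma act_add: "act (g + h) x = act g (act h x)" using ga by (simp add: group_action_def)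
lemma act_inv[simp]: "act (- g) (act g x) = x"
  by (metis act0 act_add add.commute add.right_inverse)
lemma act_inv2[simp]: "act g (act (- g) x) = x"
  by (metis act_inv minus_minus)
lemma act_inj: "act g x = act g y \<longleftrightarrow> x = y"
  by (metis act_inv)
lemma act_uniq: "act z r = act z' r \<Longrightarrow> z = z'"
proof -
  assume "act z r = act z' r"
  then have "act (- z' + z) r = r" by (metis act_add act_inv)
  then have "- z' + z = 0" using fr by (auto simp: free_action_def)
  then show ?thesis by (simp add: algebra_simps)
qed

definition delta :: "'x \<Rightarrow> 'x \<Rightarrow> real" where "delta y = (\<lambda>w. if w = y then 1 else 0)"

lemma opH_delta: "opH b c (delta y) x = (if x = y then V x else - b x y)"
proof -
  have "(\<Sum>w\<in>N x. b x w * delta y w) = (\<Sum>w\<in>N x. if w = y then b x w else 0)"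
    by (rule sum.cong) (auto simp: delta_def)
  also have "\<dots> = (if y \<in> N x then b x y else 0)" by (rule sum.delta[OF finN])
  finally have s: "(\<Sum>w\<in>N x. b x w * delta y w) = (if y \<in> N x then b x y else 0)" .
  show ?thesis
  proof (cases "x = y")
    case True
    then have "y \<notin> N x" by (simp add: N_def)
    then show ?thesis unfolding opH_eq s using True by (simp add: delta_def)
  next
    case False
    then have "(if y \<in> N x then b x y else 0) = b x y" using b_notN[of y x] by auto
    then show ?thesis unfolding opH_eq s using False by (simp add: delta_def)
  qed
qed

lemma transl_delta: "transl act g (delta y) = delta (act g y)"
  by (auto simp: transl_def delta_def fun_eq_iff)

lemma opH_delta_inv: "opH b c (delta (act g y)) (act g x) = opH b c (delta y) x"
proof -
  have "opH b c (transl act g (delta y)) = transl act g (opH b c (delta y))"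
    using hi domH_all by (auto simp: H_invariant_def)
  then show ?thesis by (simp add: transl_delta transl_def)
qed

lemma b_inv: "x \<noteq> y \<Longrightarrow> b (act g x) (act g y) = b x y"
  using opH_delta_inv[of g y x] by (simp add: opH_delta act_inj)

lemma V_inv: "V (act g x) = V x"
  using opH_delta_inv[of g x x] by (simp add: opH_delta)

lemma N_act: "N (act g x) = act g ` N x"
proof
  show "N (act g x) \<subseteq> act g ` N x"
  proof
    fix y assume y: "y \<in> N (act g x)"
    have "act (-g) y \<noteq> x" using y by (auto simp: N_def)
    moreover have "b x (act (-g) y) = b (act g x) y" using b_inv[of x "act (-g) y" g] calculation by simp
    ultimately have "act (-g) y \<in> N x" using y by (auto simp: N_def)
    then show "y \<in> act g ` N x" by (metis act_inv2 image_eqI)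
  qed
next
  show "act g ` N x \<subseteq> N (act g x)"
    by (auto simp: N_def b_inv act_inj)
qed

definition orb :: "'x \<Rightarrow> 'x set" where "orb x = range (\<lambda>g. act g x)"
definition rep :: "'x \<Rightarrow> 'x" where "rep x = (SOME y. y \<in> orb x)"
definition zof :: "'x \<Rightarrow> int ^ 'd" where "zof x = (SOME z. act z (rep x) = x)"
definition F :: "'x set" where "F = range rep"

lemma orb_act: "orb (act g x) = orb x"
proof
  show "orb (act g x) \<subseteq> orb x" unfolding orb_def
  proof
    fix y assume "y \<in> range (\<lambda>h. act h (act g x))"
    then obtain h where "y = act h (act g x)" by blast
    then have "y = act (h + g) x" by (simp add: act_add)
    then show "y \<in> range (\<lambda>h. act h x)" by blast
  qed
next
  show "orb x \<subseteq> orb (act g x)" unfolding orb_def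
  proof
    fix y assume "y \<in> range (\<lambda>h. act h x)"
    then obtain h where "y = act h x" by blast
    then have "y = act (h - g) (act g x)" by (metis act_add diff_add_cancel)
    then show "y \<in> range (\<lambda>h. act h (act g x))" by blast
  qed
qed

lemma rep_in: "rep x \<in> orb x"
  unfolding rep_def by (rule someI[of _ x]) (auto simp: orb_def intro: exI[of _ 0] act0[symmetric])

lemma rep_act: "rep (act g x) = rep x" by (simp add: rep_def orb_act)

lemma zof: "act (zof x) (rep x) = x"
proof -
  obtain g where "rep x = act g x" using rep_in by (auto simp: orb_def)
  then have "act (-g) (rep x) = x" by simp
  then show ?thesis unfolding zof_def by (rule someI)
qed

lemma zof_act: "zof (act w x) = w + zof x"
proof -
  have "act (zof (act w x)) (rep x) = act w x" using zof[of "act w x"] by (simp add: rep_act)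
  also have "\<dots> = act (w + zof x) (rep x)" by (simp add: act_add zof)
  finally show ?thesis by (rule act_uniq)
qed

lemma rep_rep: "rep (rep x) = rep x"
  by (metis rep_act zof)

lemma zof_rep: "zof (rep x) = 0"
proof -
  have "act (zof (rep x)) (rep x) = act 0 (rep x)" using zof[of "rep x"] by (simp add: rep_rep act0)
  then show ?thesis by (rule act_uniq)
qed

lemma finF: "finite F"
proof -
  have "F = (\<lambda>S. SOME y. y \<in> S) ` range orb" by (auto simp: F_def rep_def)
  moreover have "finite (range orb)" using cc by (simp add: cocompact_action_def orb_def)
  ultimately show ?thesis by simp
qed

lemma F_ne: "F \<noteq> {}" by (simp add: F_def)
lemma rep_F: "rep x \<in> F" by (simp add: F_def)
lemma F_rep: "x \<in> F \<Longrightarrow> rep x = x" by (auto simp: F_def rep_rep)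

lemma V_rep: "V x = V (rep x)" by (metis V_inv zof)

end


lemma pair_add: "pair_Zd \<alpha> (z + w) = pair_Zd \<alpha> z + pair_Zd \<alpha> w"
  by (simp add: pair_Zd_def sum.distrib distrib_left)
lemma pair_zero[simp]: "pair_Zd \<alpha> 0 = 0"
  by (simp add: pair_Zd_def)
lemma pair_lin: "pair_Zd ((1 - t) *\<^sub>R \<alpha> + t *\<^sub>R \<beta>) z = (1 - t) * pair_Zd \<alpha> z + t * pair_Zd \<beta> z"
proof -
  have "pair_Zd ((1 - t) *\<^sub>R \<alpha> + t *\<^sub>R \<beta>) z =
     (\<Sum>i\<in>UNIV. (1 - t) * (\<alpha> $ i * real_of_int (z $ i)) + t * (\<beta> $ i * real_of_int (z $ i)))"
    unfolding pair_Zd_def by (rule sum.cong) (simp_all add: algebra_simps)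
  also have "\<dots> = (1 - t) * pair_Zd \<alpha> z + t * pair_Zd \<beta> z"
    unfolding pair_Zd_def by (simp add: sum.distrib sum_distrib_left)
  finally show ?thesis .
qed
lemma pair_unit: "pair_Zd \<alpha> (\<chi> j. if j = i then 1 else 0) = \<alpha> $ i"
  by (simp add: pair_Zd_def if_distrib cong: if_cong)

context setting begin

definition Mul :: "real ^ 'd \<Rightarrow> ('x \<Rightarrow> real) set" where
  "Mul \<alpha> = {g. \<forall>z x. g (act z x) = exp (pair_Zd \<alpha> z) * g x}"

lemma Mul_rep: "g \<in> Mul \<alpha> \<Longrightarrow> g x = exp (pair_Zd \<alpha> (zof x)) * g (rep x)"
  unfolding Mul_def by (metis (mono_tags, lifting) mem_Collect_eq zof)

definition sC :: real where "sC = 1 + Max (V ` F)"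

lemma V_le: "V x \<le> sC - 1"
proof -
  have "V (rep x) \<le> Max (V ` F)" using finF rep_F by auto
  then show ?thesis using V_rep[of x] by (simp add: sC_def)
qed

definition Tm :: "('x \<Rightarrow> real) \<Rightarrow> 'x \<Rightarrow> real" where
  "Tm g x = (sC - V x) * g x + (\<Sum>y\<in>N x. b x y * g y)"

lemma opH_Tm: "opH b c g x = sC * g x - Tm g x"
  by (simp add: opH_eq Tm_def algebra_simps)

lemma Tm_Mul: assumes "g \<in> Mul \<alpha>" shows "Tm g \<in> Mul \<alpha>"
  unfolding Mul_def
proof (intro CollectI allI)
  fix z x
  have g: "g (act z y) = exp (pair_Zd \<alpha> z) * g y" for y using assms by (simp add: Mul_def)
  have "(\<Sum>y\<in>N (act z x). b (act z x) y * g y) = (\<Sum>y\<in>N x. b (act z x) (act z y) * g (act z y))"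
    unfolding N_act by (rule sum.reindex_cong[where l="act z"]) (auto simp: inj_on_def act_inj)
  also have "\<dots> = (\<Sum>y\<in>N x. exp (pair_Zd \<alpha> z) * (b x y * g y))"
    by (rule sum.cong) (auto simp: N_def b_inv g)
  also have "\<dots> = exp (pair_Zd \<alpha> z) * (\<Sum>y\<in>N x. b x y * g y)" by (simp add: sum_distrib_left)
  finally show "Tm g (act z x) = exp (pair_Zd \<alpha> z) * Tm g x"
    by (simp add: Tm_def V_inv g algebra_simps)
qed

lemma Tm_lin: "Tm (\<lambda>x. a * g x + d * h x) = (\<lambda>x. a * Tm g x + d * Tm h x)"
  by (simp add: fun_eq_iff Tm_def sum.distrib sum_distrib_left algebra_simps)

lemma Tmk_lin: "(Tm ^^ k) (\<lambda>x. a * g x + d * h x) = (\<lambda>x. a * (Tm ^^ k) g x + d * (Tm ^^ k) h x)"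
  by (induction k) (simp_all add: Tm_lin)

lemma Tmk_scale: "(Tm ^^ k) (\<lambda>x. a * g x) = (\<lambda>x. a * (Tm ^^ k) g x)"
  using Tmk_lin[of k a g 0 g] by simp

lemma Tmk_diff: "(Tm ^^ k) (\<lambda>x. g x - a * h x) = (\<lambda>x. (Tm ^^ k) g x - a * (Tm ^^ k) h x)"
  using Tmk_lin[of k 1 g "-a" h] by simp

lemma Mul_lin: "g \<in> Mul \<alpha> \<Longrightarrow> h \<in> Mul \<alpha> \<Longrightarrow> (\<lambda>x. a * g x + d * h x) \<in> Mul \<alpha>"
  by (simp add: Mul_def algebra_simps)

lemma Tmk_Mul: "g \<in> Mul \<alpha> \<Longrightarrow> (Tm ^^ k) g \<in> Mul \<alpha>"
  by (induction k) (simp_all add: Tm_Mul)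

lemma Tm_ge:
  assumes "\<And>u. 0 \<le> w u"
  shows "w x \<le> Tm w x" and "0 \<le> Tm w x" and "y \<in> N x \<Longrightarrow> b x y * w y \<le> Tm w x"
proof -
  have s: "0 \<le> (\<Sum>y\<in>N x. b x y * w y)" using assms bnn by (simp add: sum_nonneg)
  have "1 \<le> sC - V x" using V_le[of x] by simp
  then have "1 * w x \<le> (sC - V x) * w x" by (rule mult_right_mono) (rule assms)
  then have "w x \<le> (sC - V x) * w x" by simp
  then show 1: "w x \<le> Tm w x" using s by (simp add: Tm_def)
  then show "0 \<le> Tm w x" using assms[of x] by linarith
  assume y: "y \<in> N x"
  have "b x y * w y \<le> (\<Sum>y\<in>N x. b x y * w y)"
    by (rule member_le_sum[OF y]) (use assms bnn finN in auto)
  moreover have "0 \<le> (sC - V x) * w x" using \<open>1 \<le> sC - V x\<close> assms[of x] by simp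
  ultimately show "b x y * w y \<le> Tm w x" by (simp add: Tm_def)
qed

lemma Tmk_nonneg: "(\<And>u. 0 \<le> w u) \<Longrightarrow> 0 \<le> (Tm ^^ k) w x"
proof (induction k arbitrary: x)
  case (Suc k) then show ?case using Tm_ge(2)[of "(Tm ^^ k) w" x] by simp
qed simp

lemma Tmk_mono: "(\<And>u. 0 \<le> w u) \<Longrightarrow> (Tm ^^ k) w x \<le> (Tm ^^ (m + k)) w x"
proof (induction m)
  case (Suc m)
  have "(Tm ^^ (m + k)) w x \<le> Tm ((Tm ^^ (m + k)) w) x"
    by (rule Tm_ge(1)) (use Tmk_nonneg Suc.prems in blast)
  then show ?case using Suc by simp
qed simp

lemma path_pos:
  assumes "(\<lambda>u v. 0 < b u v)\<^sup>*\<^sup>* x y"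
  shows "\<exists>k. \<forall>w. (\<forall>u. 0 \<le> w u) \<longrightarrow> 0 < w y \<longrightarrow> 0 < (Tm ^^ k) w x"
  using assms
proof (induction rule: converse_rtranclp_induct)
  case base
  then show ?case by (intro exI[of _ 0]) simp
next
  case (step x x')
  then obtain k where k: "\<forall>w. (\<forall>u. 0 \<le> w u) \<longrightarrow> 0 < w y \<longrightarrow> 0 < (Tm ^^ k) w x'" by blast
  show ?case
  proof (cases "x = x'")
    case True then show ?thesis using k by blast
  next
    case False
    then have x': "x' \<in> N x" using step by (simp add: N_def)
    show ?thesis
    proof (intro exI[of _ "Suc k"] allI impI)
      fix w :: "'x \<Rightarrow> real" assume w: "\<forall>u. 0 \<le> w u" "0 < w y"
      have "b x x' * (Tm ^^ k) w x' \<le> Tm ((Tm ^^ k) w) x"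
        by (rule Tm_ge(3)[OF _ x']) (use Tmk_nonneg w in blast)
      moreover have "0 < b x x' * (Tm ^^ k) w x'" using k w x' by (simp add: N_def)
      ultimately show "0 < (Tm ^^ Suc k) w x" by simp
    qed
  qed
qed

lemma posK: "\<exists>K. \<forall>w. (\<forall>u. 0 \<le> w u) \<longrightarrow> (\<exists>y\<in>F. 0 < w y) \<longrightarrow> (\<forall>x\<in>F. 0 < (Tm ^^ K) w x)"
proof -
  define kk where "kk x y = (SOME k. \<forall>w. (\<forall>u. 0 \<le> w u) \<longrightarrow> 0 < w y \<longrightarrow> 0 < (Tm ^^ k) w x)" for x y
  have kk: "\<forall>w. (\<forall>u. 0 \<le> w u) \<longrightarrow> 0 < w y \<longrightarrow> 0 < (Tm ^^ kk x y) w x" for x y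
    unfolding kk_def by (rule someI_ex) (use path_pos[of x y] conn in \<open>unfold graph_connected_def, blast\<close>)
  define K where "K = Max ((\<lambda>(x, y). kk x y) ` (F \<times> F))"
  have le: "kk x y \<le> K" if "x \<in> F" "y \<in> F" for x y
    unfolding K_def using finF that by (intro Max_ge) auto
  show ?thesis
  proof (intro exI[of _ K] allI impI ballI)
    fix w :: "'x \<Rightarrow> real" and x
    assume w: "\<forall>u. 0 \<le> w u" "\<exists>y\<in>F. 0 < w y" and x: "x \<in> F"
    then obtain y where y: "y \<in> F" "0 < w y" by blast
    have "0 < (Tm ^^ kk x y) w x" using kk w y by blast
    also have "\<dots> \<le> (Tm ^^ (K - kk x y + kk x y)) w x" by (rule Tmk_mono) (use w in blast)
    finally show "0 < (Tm ^^ K) w x" using le[OF x y(1)] by simp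
  qed
qed

lemma cont_Tm: "continuous_on UNIV Tm"
proof (rule continuous_on_coordinatewise_then_product)
  fix x
  show "continuous_on UNIV (\<lambda>g. Tm g x)"
    unfolding Tm_def
    by (intro continuous_on_add continuous_on_mult_left continuous_on_sum continuous_on_product_coordinates)
qed

lemma cont_Tmk: "continuous_on UNIV (Tm ^^ k)"
proof (induction k)
  case 0 then show ?case by (simp add: continuous_on_id)
next
  case (Suc k)
  have "continuous_on UNIV (Tm \<circ> (Tm ^^ k))"
    by (rule continuous_on_compose[OF Suc]) (rule continuous_on_subset[OF cont_Tm], simp)
  then show ?case by simp
qed

lemma cont_Tmk_at: "continuous_on S (\<lambda>g. (Tm ^^ k) g x)"
  by (rule continuous_on_subset[OF continuous_on_product_then_coordinatewise[OF cont_Tmk]]) simp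

end


lemma cont_Min:
  fixes f :: "'i \<Rightarrow> 'a::topological_space \<Rightarrow> real"
  assumes "finite A" "A \<noteq> {}" "\<And>i. i \<in> A \<Longrightarrow> continuous_on S (f i)"
  shows "continuous_on S (\<lambda>g. Min ((\<lambda>i. f i g) ` A))"
  using assms
proof (induction A rule: finite_ne_induct)
  case (singleton x)
  then show ?case by simp
next
  case (insert x A)
  have "continuous_on S (\<lambda>g. min (f x g) (Min ((\<lambda>i. f i g) ` A)))"
    by (rule continuous_on_min) (use insert in auto)
  moreover have "Min ((\<lambda>i. f i g) ` insert x A) = min (f x g) (Min ((\<lambda>i. f i g) ` A))" for g
    using insert by (simp add: Min_insert)
  ultimately show ?case by simp
qed

context setting begin

definition Sx :: "real ^ 'd \<Rightarrow> ('x \<Rightarrow> real) set" where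
  "Sx \<alpha> = {g. (\<forall>z x. g (act z x) = exp (pair_Zd \<alpha> z) * g x) \<and> (\<forall>x. 0 \<le> g x) \<and> sum g F = 1}"

lemma Sx_Mul: "g \<in> Sx \<alpha> \<Longrightarrow> g \<in> Mul \<alpha>" by (simp add: Sx_def Mul_def)

lemma Sx_closed: "closed (Sx \<alpha>)"
  unfolding Sx_def
proof (intro closed_Collect_conj closed_Collect_all)
  fix z x
  show "closed {g :: 'x \<Rightarrow> real. g (act z x) = exp (pair_Zd \<alpha> z) * g x}"
    by (intro closed_Collect_eq continuous_on_mult_left continuous_on_product_coordinates)
  show "closed {g :: 'x \<Rightarrow> real. 0 \<le> g x}"
    by (intro closed_Collect_le continuous_on_const continuous_on_product_coordinates)
next
  show "closed {g :: 'x \<Rightarrow> real. sum g F = 1}"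
    by (intro closed_Collect_eq continuous_on_const continuous_on_sum continuous_on_product_coordinates)
qed

lemma Sx_sub: "Sx \<alpha> \<subseteq> Pi\<^sub>E UNIV (\<lambda>x. {0 .. exp (pair_Zd \<alpha> (zof x))})"
proof
  fix g assume g: "g \<in> Sx \<alpha>"
  have "g x \<in> {0 .. exp (pair_Zd \<alpha> (zof x))}" for x
  proof -
    have nn: "\<And>x. 0 \<le> g x" and s: "sum g F = 1" using g by (auto simp: Sx_def)
    have "g (rep x) \<le> sum g F" by (rule member_le_sum) (use nn rep_F finF in auto)
    then have "g (rep x) \<le> 1" using s by simp
    then have "exp (pair_Zd \<alpha> (zof x)) * g (rep x) \<le> exp (pair_Zd \<alpha> (zof x))"
      by (simp add: mult_left_le)
    then show ?thesis using Mul_rep[OF Sx_Mul[OF g], of x] nn[of x] by simp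
  qed
  then show "g \<in> Pi\<^sub>E UNIV (\<lambda>x. {0 .. exp (pair_Zd \<alpha> (zof x))})" by auto
qed

lemma Sx_compact: "compact (Sx \<alpha>)"
proof -
  have "compactin (product_topology (\<lambda>i. euclidean) UNIV) (Pi\<^sub>E UNIV (\<lambda>x. {0 .. exp (pair_Zd \<alpha> (zof x))}))"
    by (subst compactin_PiE) auto
  then have "compact (Pi\<^sub>E UNIV (\<lambda>x. {0 .. exp (pair_Zd \<alpha> (zof x))}) :: ('x \<Rightarrow> real) set)"
    by (simp add: euclidean_product_topology)
  then have "compact (Pi\<^sub>E UNIV (\<lambda>x. {0 .. exp (pair_Zd \<alpha> (zof x))}) \<inter> Sx \<alpha>)"
    using Sx_closed by blast
  moreover have "Pi\<^sub>E UNIV (\<lambda>x. {0 .. exp (pair_Zd \<alpha> (zof x))}) \<inter> Sx \<alpha> = Sx \<alpha>" using Sx_sub by blast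
  ultimately show ?thesis by simp
qed

lemma zof_F: "x \<in> F \<Longrightarrow> zof x = 0" using zof_rep F_rep by metis

lemma Sx_ne: "Sx \<alpha> \<noteq> {}"
proof -
  define g0 where "g0 x = exp (pair_Zd \<alpha> (zof x)) / real (card F)" for x
  have cF: "0 < card F" using finF F_ne by (simp add: card_gt_0_iff)
  have "g0 \<in> Sx \<alpha>"
    unfolding Sx_def
  proof (intro CollectI conjI allI)
    fix z x show "g0 (act z x) = exp (pair_Zd \<alpha> z) * g0 x"
      by (simp add: g0_def zof_act pair_add exp_add)
  next
    fix x show "0 \<le> g0 x" by (simp add: g0_def)
  next
    have "sum g0 F = (\<Sum>x\<in>F. 1 / real (card F))" by (rule sum.cong) (auto simp: g0_def zof_F)
    then show "sum g0 F = 1" using cF by simp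
  qed
  then show ?thesis by blast
qed

lemma Sx_pos: "g \<in> Sx \<alpha> \<Longrightarrow> \<exists>y\<in>F. 0 < g y"
proof (rule ccontr)
  assume g: "g \<in> Sx \<alpha>" and "\<not> (\<exists>y\<in>F. 0 < g y)"
  then have "\<forall>y\<in>F. g y \<le> 0" by auto
  then have "sum g F \<le> 0" by (simp add: sum_nonpos)
  then show False using g by (simp add: Sx_def)
qed

lemma exist_eig: "\<exists>g r. g \<in> Mul \<alpha> \<and> (\<forall>x. 0 < g x) \<and> (\<forall>x. Tm g x = r * g x)"
proof -
  obtain K where K: "\<And>w. (\<forall>u. 0 \<le> w u) \<Longrightarrow> (\<exists>y\<in>F. 0 < w y) \<Longrightarrow> (\<forall>x\<in>F. 0 < (Tm ^^ K) w x)"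
    using posK by blast
  have Kpos: "\<And>x. x \<in> F \<Longrightarrow> 0 < (Tm ^^ K) g x" if "g \<in> Sx \<alpha>" for g
    using K[of g] that Sx_pos[OF that] by (auto simp: Sx_def)
  define rr where "rr g x = (Tm ^^ Suc K) g x / (Tm ^^ K) g x" for g x
  define rho' where "rho' g = Min ((\<lambda>x. rr g x) ` F)" for g
  have "continuous_on (Sx \<alpha>) rho'"
    unfolding rho'_def
  proof (rule cont_Min[OF finF F_ne])
    fix x assume x: "x \<in> F"
    show "continuous_on (Sx \<alpha>) (\<lambda>g. rr g x)"
      unfolding rr_def
    proof (rule continuous_on_divide)
      show "continuous_on (Sx \<alpha>) (\<lambda>g. (Tm ^^ Suc K) g x)" by (rule cont_Tmk_at)
      show "continuous_on (Sx \<alpha>) (\<lambda>g. (Tm ^^ K) g x)" by (rule cont_Tmk_at)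
      show "\<forall>g\<in>Sx \<alpha>. (Tm ^^ K) g x \<noteq> 0" using Kpos x by (metis less_irrefl)
    qed
  qed
  then obtain gs where gs: "gs \<in> Sx \<alpha>" and gmax: "\<And>g. g \<in> Sx \<alpha> \<Longrightarrow> rho' g \<le> rho' gs"
    using continuous_attains_sup[OF Sx_compact Sx_ne] by blast
  define \<psi> where "\<psi> = (Tm ^^ K) gs"
  define r where "r = rho' gs"
  have gsM: "gs \<in> Mul \<alpha>" using gs by (rule Sx_Mul)
  have gsnn: "\<And>u. 0 \<le> gs u" using gs by (simp add: Sx_def)
  have psiM: "\<psi> \<in> Mul \<alpha>" unfolding \<psi>_def by (rule Tmk_Mul[OF gsM])
  have psinn: "\<And>u. 0 \<le> \<psi> u" unfolding \<psi>_def by (rule Tmk_nonneg) (rule gsnn)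
  have psipos: "\<And>x. x \<in> F \<Longrightarrow> 0 < \<psi> x" unfolding \<psi>_def using Kpos[OF gs] by blast
  have ge: "r * \<psi> x \<le> Tm \<psi> x" if x: "x \<in> F" for x
  proof -
    have "r \<le> rr gs x" unfolding r_def rho'_def by (rule Min_le) (use finF x in auto)
    then have "r * \<psi> x \<le> rr gs x * \<psi> x" using psipos[OF x] by (simp add: mult_right_mono)
    also have "\<dots> = Tm \<psi> x" unfolding rr_def \<psi>_def using psipos[OF x] \<psi>_def by simp
    finally show ?thesis .
  qed
  define w where "w x = Tm \<psi> x - r * \<psi> x" for x
  have wM: "w \<in> Mul \<alpha>"
  proof -
    have "(\<lambda>x. 1 * Tm \<psi> x + (- r) * \<psi> x) \<in> Mul \<alpha>" by (rule Mul_lin[OF Tm_Mul[OF psiM] psiM])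
    then show ?thesis by (simp add: w_def[abs_def])
  qed
  have wF: "\<And>x. x \<in> F \<Longrightarrow> 0 \<le> w x" using ge by (simp add: w_def)
  have wnn: "\<And>x. 0 \<le> w x"
  proof -
    fix x show "0 \<le> w x" using Mul_rep[OF wM, of x] wF[OF rep_F[of x]] by simp
  qed
  have w0F: "\<forall>y\<in>F. w y = 0"
  proof (rule ccontr)
    assume "\<not> (\<forall>y\<in>F. w y = 0)"
    then obtain y0 where y0: "y0 \<in> F" "w y0 \<noteq> 0" by blast
    then have "0 < w y0" using wnn[of y0] by linarith
    then have "\<exists>y\<in>F. 0 < w y" using y0 by blast
    then have Pw: "\<forall>x\<in>F. 0 < (Tm ^^ K) w x" using K wnn by blast
    define cs where "cs = sum \<psi> F"
    have cs: "0 < cs" unfolding cs_def using psipos psinn F_ne finF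
      by (metis all_not_in_conv sum_pos)
    define g' where "g' x = (1 / cs) * \<psi> x" for x
    have g'S: "g' \<in> Sx \<alpha>"
    proof -
      have "(\<lambda>x. (1 / cs) * \<psi> x + 0 * \<psi> x) \<in> Mul \<alpha>" by (rule Mul_lin[OF psiM psiM])
      then have "g' \<in> Mul \<alpha>" by (simp add: g'_def[abs_def])
      moreover have "sum g' F = 1" unfolding g'_def using cs by (simp add: sum_divide_distrib[symmetric] cs_def)
      moreover have "0 \<le> g' x" for x unfolding g'_def using cs psinn[of x] by simp
      ultimately show ?thesis by (simp add: Sx_def Mul_def)
    qed
    have Kg': "(Tm ^^ K) g' = (\<lambda>x. (1 / cs) * (Tm ^^ K) \<psi> x)"
      unfolding g'_def[abs_def] by (rule Tmk_scale)
    have KSg': "(Tm ^^ Suc K) g' = (\<lambda>x. (1 / cs) * Tm ((Tm ^^ K) \<psi>) x)"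
    proof -
      have "(Tm ^^ Suc K) g' = Tm ((Tm ^^ K) g')" by simp
      also have "\<dots> = Tm (\<lambda>x. (1 / cs) * (Tm ^^ K) \<psi> x + 0 * (Tm ^^ K) \<psi> x)" by (simp add: Kg')
      also have "\<dots> = (\<lambda>x. (1 / cs) * Tm ((Tm ^^ K) \<psi>) x)" by (simp only: Tm_lin) simp
      finally show ?thesis .
    qed
    have PwE: "(Tm ^^ K) w = (\<lambda>x. Tm ((Tm ^^ K) \<psi>) x - r * (Tm ^^ K) \<psi> x)"
    proof -
      have "(Tm ^^ K) w = (\<lambda>x. (Tm ^^ K) (Tm \<psi>) x - r * (Tm ^^ K) \<psi> x)"
        unfolding w_def[abs_def] by (rule Tmk_diff)
      also have "(Tm ^^ K) (Tm \<psi>) = Tm ((Tm ^^ K) \<psi>)" by (simp add: funpow_swap1)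
      finally show ?thesis .
    qed
    have Ppos: "\<forall>x\<in>F. 0 < (Tm ^^ K) \<psi> x" using K[of \<psi>] psinn psipos F_ne by blast
    have "r < rho' g'"
      unfolding rho'_def
    proof (subst Min_gr_iff)
      show "finite ((\<lambda>x. rr g' x) ` F)" using finF by simp
      show "(\<lambda>x. rr g' x) ` F \<noteq> {}" using F_ne by simp
      show "\<forall>a\<in>(\<lambda>x. rr g' x) ` F. r < a"
      proof
        fix a assume "a \<in> (\<lambda>x. rr g' x) ` F"
        then obtain x where x: "x \<in> F" and a: "a = rr g' x" by blast
        have p: "0 < (Tm ^^ K) \<psi> x" using Ppos x by blast
        have "a = ((1 / cs) * Tm ((Tm ^^ K) \<psi>) x) / ((1 / cs) * (Tm ^^ K) \<psi> x)"
          unfolding a rr_def by (simp only: KSg' Kg')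
        also have "\<dots> = Tm ((Tm ^^ K) \<psi>) x / (Tm ^^ K) \<psi> x"
          by (rule mult_divide_mult_cancel_left) (use cs in simp)
        finally have "a = Tm ((Tm ^^ K) \<psi>) x / (Tm ^^ K) \<psi> x" .
        moreover have "r * (Tm ^^ K) \<psi> x < Tm ((Tm ^^ K) \<psi>) x"
        proof -
          have "0 < (Tm ^^ K) w x" using Pw x by blast
          then show ?thesis unfolding PwE by simp
        qed
        ultimately show "r < a" using p by (simp add: pos_less_divide_eq)
      qed
    qed
    moreover have "rho' g' \<le> r" unfolding r_def by (rule gmax[OF g'S])
    ultimately show False by simp
  qed
  have w0: "\<And>x. w x = 0"
  proof -
    fix x show "w x = 0" using Mul_rep[OF wM, of x] w0F rep_F[of x] by simp
  qed
  have "\<forall>x. 0 < \<psi> x"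
  proof
    fix x show "0 < \<psi> x" using Mul_rep[OF psiM, of x] psipos[OF rep_F[of x]] by simp
  qed
  moreover have "\<forall>x. Tm \<psi> x = r * \<psi> x" using w0 by (simp add: w_def)
  ultimately show ?thesis using psiM by blast
qed

end


lemma young_strict:
  fixes a d t :: real
  assumes "0 < a" "0 < d" "a \<noteq> d" "0 < t" "t < 1"
  shows "a powr (1 - t) * d powr t < (1 - t) * a + t * d"
proof -
  define p where "p = sqrt a"
  define q where "q = sqrt d"
  have pq: "0 < p" "0 < q" using assms by (auto simp: p_def q_def)
  have pqne: "p \<noteq> q" using assms by (auto simp: p_def q_def)
  have a: "a = p * p" and d: "d = q * q" using assms by (auto simp: p_def q_def)
  have le: "p powr (1 - t) * q powr t \<le> (1 - t) * p + t * q"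
    using Youngs_inequality_0[of "1 - t" t p q] pq assms by simp
  have nn: "0 \<le> p powr (1 - t) * q powr t" by simp
  have "(p powr (1 - t) * q powr t) * (p powr (1 - t) * q powr t)
      \<le> ((1 - t) * p + t * q) * ((1 - t) * p + t * q)"
    by (rule mult_mono[OF le le]) (use le nn in linarith)+
  moreover have "(p powr (1 - t) * q powr t) * (p powr (1 - t) * q powr t) = a powr (1 - t) * d powr t"
  proof -
    have "(p powr (1 - t) * q powr t) * (p powr (1 - t) * q powr t)
        = (p powr (1 - t) * p powr (1 - t)) * (q powr t * q powr t)" by (simp add: algebra_simps)
    also have "\<dots> = (p * p) powr (1 - t) * (q * q) powr t" using pq by (simp add: powr_mult)
    finally show ?thesis using a d by simp
  qed
  moreover have "((1 - t) * p + t * q) * ((1 - t) * p + t * q) < (1 - t) * a + t * d"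
  proof -
    have "0 < (p - q) * (p - q)" using pqne by (auto simp: zero_less_mult_iff)
    then have "0 < t * (1 - t) * ((p - q) * (p - q))" using assms by simp
    moreover have "(1 - t) * a + t * d - ((1 - t) * p + t * q) * ((1 - t) * p + t * q)
        = t * (1 - t) * ((p - q) * (p - q))" unfolding a d by (simp add: algebra_simps)
    ultimately show ?thesis by linarith
  qed
  ultimately show ?thesis by linarith
qed

lemma young_le:
  fixes a d t :: real
  assumes "0 < a" "0 < d" "0 \<le> t" "t \<le> 1"
  shows "a powr (1 - t) * d powr t \<le> (1 - t) * a + t * d"
  using Youngs_inequality_0[of "1 - t" t a d] assms by simp

context setting begin

lemma reach:
  assumes "P x" and "\<And>u v. P u \<Longrightarrow> v \<in> N u \<Longrightarrow> P v"
  shows "P y"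
proof -
  have "(\<lambda>u v. 0 < b u v)\<^sup>*\<^sup>* x y" using conn by (simp add: graph_connected_def)
  then show ?thesis
  proof (induction rule: rtranclp_induct)
    case base show ?case by (rule assms(1))
  next
    case (step u v)
    show ?case
    proof (cases "v = u")
      case True then show ?thesis using step by simp
    next
      case False then have "v \<in> N u" using step(2) by (simp add: N_def)
      then show ?thesis using assms(2) step(3) by blast
    qed
  qed
qed

lemma opH_lin: "opH b c (\<lambda>x. g x - t * f x) x = opH b c g x - t * opH b c f x"
proof -
  have "(\<Sum>y\<in>N x. b x y * (g y - t * f y)) = (\<Sum>y\<in>N x. b x y * g y) - t * (\<Sum>y\<in>N x. b x y * f y)"
    by (simp add: sum_subtractf sum_distrib_left right_diff_distrib mult.left_commute)
  then show ?thesis by (simp add: opH_eq algebra_simps)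
qed

lemma zero_terms:
  assumes "\<And>y. 0 \<le> h y" "(\<Sum>y\<in>N u. b u y * h y) = 0" "v \<in> N u"
  shows "h v = 0"
proof -
  have "(\<Sum>y\<in>N u. b u y * h y) = 0 \<longleftrightarrow> (\<forall>y\<in>N u. b u y * h y = 0)"
    by (rule sum_nonneg_eq_0_iff[OF finN]) (simp add: assms(1) bnn)
  then have "\<forall>y\<in>N u. b u y * h y = 0" using assms(2) by blast
  then have "b u v * h v = 0" using assms(3) by blast
  then show ?thesis using assms(3) by (simp add: N_def)
qed

lemma compare:
  assumes fM: "f \<in> Mul \<alpha>" and gM: "g \<in> Mul \<alpha>" and fp: "\<And>x. 0 < f x" and gp: "\<And>x. 0 < g x"
    and fe: "\<And>x. opH b c f x = L * f x" and gs: "\<And>x. \<mu> * g x \<le> opH b c g x"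
  shows "\<mu> \<le> L \<and> (\<mu> = L \<longrightarrow> (\<forall>x. opH b c g x = \<mu> * g x))"
proof -
  define t where "t = Min ((\<lambda>x. g x / f x) ` F)"
  have "t \<in> (\<lambda>x. g x / f x) ` F" unfolding t_def by (rule Min_in) (use finF F_ne in auto)
  then obtain x1 where x1: "x1 \<in> F" "t = g x1 / f x1" by blast
  have tle: "t \<le> g x / f x" for x
  proof -
    have "t \<le> g (rep x) / f (rep x)" unfolding t_def by (rule Min_le) (use finF rep_F in auto)
    also have "\<dots> = g x / f x"
      unfolding Mul_rep[OF gM, of x] Mul_rep[OF fM, of x] by (rule mult_divide_mult_cancel_left[symmetric]) simp
    finally show ?thesis .
  qed
  define \<psi> where "\<psi> x = g x - t * f x" for x
  have psinn: "0 \<le> \<psi> x" for x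
    using tle[of x] fp[of x] by (simp add: \<psi>_def pos_le_divide_eq)
  have psi1: "\<psi> x1 = 0" using x1 fp[of x1] by (simp add: \<psi>_def)
  have sn: "0 \<le> (\<Sum>y\<in>N x. b x y * \<psi> y)" for x by (intro sum_nonneg mult_nonneg_nonneg bnn psinn)
  have key: "(\<mu> - L) * g x \<le> - (\<Sum>y\<in>N x. b x y * \<psi> y)" if z: "\<psi> x = 0" for x
  proof -
    have gx: "g x = t * f x" using z by (simp add: \<psi>_def)
    have "opH b c \<psi> x = - (\<Sum>y\<in>N x. b x y * \<psi> y)" by (simp add: opH_eq z)
    moreover have "opH b c \<psi> x = opH b c g x - t * opH b c f x" unfolding \<psi>_def[abs_def] by (rule opH_lin)
    moreover have "\<mu> * g x - L * g x \<le> opH b c g x - t * opH b c f x"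
      using gs[of x] fe[of x] gx by (simp add: algebra_simps)
    ultimately show ?thesis by (simp add: algebra_simps)
  qed
  have A: "\<mu> \<le> L"
  proof -
    have "(\<mu> - L) * g x1 \<le> 0" using key[OF psi1] sn[of x1] by linarith
    then show ?thesis using gp[of x1] by (simp add: mult_le_0_iff)
  qed
  have B: "\<forall>x. opH b c g x = \<mu> * g x" if eq: "\<mu> = L"
  proof -
    have prp: "\<psi> v = 0" if "\<psi> u = 0" "v \<in> N u" for u v
    proof -
      have "(\<Sum>y\<in>N u. b u y * \<psi> y) = 0" using key[OF that(1)] sn[of u] eq by simp
      then show ?thesis using zero_terms[of \<psi> u v] psinn that(2) by blast
    qed
    have allz: "\<psi> y = 0" for y by (rule reach[of "\<lambda>u. \<psi> u = 0" x1]) (use psi1 prp in auto)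
    show ?thesis
    proof
      fix x
      have "opH b c \<psi> x = 0" by (simp add: opH_eq allz)
      moreover have "opH b c \<psi> x = opH b c g x - t * opH b c f x" unfolding \<psi>_def[abs_def] by (rule opH_lin)
      moreover have "g x = t * f x" using allz[of x] by (simp add: \<psi>_def)
      ultimately show "opH b c g x = \<mu> * g x" using fe[of x] eq by (simp add: algebra_simps)
    qed
  qed
  show ?thesis using A B by blast
qed

lemma pos_harm:
  assumes nn: "\<And>x. 0 \<le> f x" and f1: "f x0 = 1" and fe: "\<And>x. opH b c f x = L * f x"
  shows "0 < f x"
proof (rule ccontr)
  assume "\<not> 0 < f x"
  then have fx: "f x = 0" using nn[of x] by simp
  have prp: "f v = 0" if "f u = 0" "v \<in> N u" for u v
  proof -
    have "(\<Sum>y\<in>N u. b u y * f y) = 0" using fe[of u] that(1) by (simp add: opH_eq)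
    then show ?thesis using zero_terms[of f u v] nn that(2) by blast
  qed
  have "f x0 = 0" by (rule reach[of "\<lambda>u. f u = 0" x]) (use fx prp in auto)
  then show False using f1 by simp
qed

end


context setting begin

lemma exp_powr: "exp (a::real) powr s = exp (s * a)" by (simp add: powr_def)

lemma concave_core:
  assumes faM: "fa \<in> Mul \<alpha>" and fap: "\<And>x. 0 < fa x" and fae: "\<And>x. opH b c fa x = La * fa x"
    and fbM: "fb \<in> Mul \<beta>" and fbp: "\<And>x. 0 < fb x" and fbe: "\<And>x. opH b c fb x = Lb * fb x"
    and fgM: "fg \<in> Mul ((1 - t) *\<^sub>R \<alpha> + t *\<^sub>R \<beta>)" and fgp: "\<And>x. 0 < fg x"
    and fge: "\<And>x. opH b c fg x = Lg * fg x"
    and ab: "\<alpha> \<noteq> \<beta>" and t0: "0 < t" and t1: "t < 1"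
  shows "(1 - t) * La + t * Lb < Lg"
proof -
  define \<gamma> where "\<gamma> = (1 - t) *\<^sub>R \<alpha> + t *\<^sub>R \<beta>"
  define g where "g x = fa x powr (1 - t) * fb x powr t" for x
  define \<mu> where "\<mu> = (1 - t) * La + t * Lb"
  have gp: "0 < g x" for x using fap[of x] fbp[of x] by (simp add: g_def)
  have gM: "g \<in> Mul \<gamma>"
    unfolding Mul_def
  proof (intro CollectI allI)
    fix z x
    have a: "fa (act z x) = exp (pair_Zd \<alpha> z) * fa x" using faM by (simp add: Mul_def)
    have b': "fb (act z x) = exp (pair_Zd \<beta> z) * fb x" using fbM by (simp add: Mul_def)
    have "g (act z x) = (exp (pair_Zd \<alpha> z) powr (1 - t) * fa x powr (1 - t)) * (exp (pair_Zd \<beta> z) powr t * fb x powr t)"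
      unfolding g_def a b' using fap[of x] fbp[of x] by (simp add: powr_mult)
    also have "\<dots> = exp ((1 - t) * pair_Zd \<alpha> z + t * pair_Zd \<beta> z) * g x"
      by (simp add: exp_powr g_def mult_exp_exp algebra_simps)
    finally show "g (act z x) = exp (pair_Zd \<gamma> z) * g x" by (simp add: \<gamma>_def pair_lin)
  qed
  define A where "A x y = fa y / fa x" for x y
  define B where "B x y = fb y / fb x" for x y
  have gratio: "g y = g x * (A x y powr (1 - t) * B x y powr t)" for x y
  proof -
    have "A x y powr (1 - t) = fa y powr (1 - t) / fa x powr (1 - t)"
      unfolding A_def using fap[of x] fap[of y] by (simp add: powr_divide)
    moreover have "B x y powr t = fb y powr t / fb x powr t"
      unfolding B_def using fbp[of x] fbp[of y] by (simp add: powr_divide)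
    ultimately show ?thesis using fap[of x] fbp[of x] by (simp add: g_def)
  qed
  have ABpos: "0 < A x y" "0 < B x y" for x y using fap fbp by (auto simp: A_def B_def)
  have termle: "b x y * g y \<le> b x y * (g x * ((1 - t) * A x y + t * B x y))" for x y
  proof -
    have "A x y powr (1 - t) * B x y powr t \<le> (1 - t) * A x y + t * B x y"
      by (rule young_le) (use ABpos t0 t1 in auto)
    then have "g y \<le> g x * ((1 - t) * A x y + t * B x y)"
      unfolding gratio[of y x] using gp[of x] by (simp add: mult_left_mono)
    then show ?thesis using bnn by (simp add: mult_left_mono)
  qed
  have sumR: "(\<Sum>y\<in>N x. b x y * (g x * ((1 - t) * A x y + t * B x y))) = g x * (V x - \<mu>)" for x
  proof -
    have Sa: "(\<Sum>y\<in>N x. b x y * fa y) = (V x - La) * fa x" using fae[of x] by (simp add: opH_eq algebra_simps)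
    have Sb: "(\<Sum>y\<in>N x. b x y * fb y) = (V x - Lb) * fb x" using fbe[of x] by (simp add: opH_eq algebra_simps)
    have "(\<Sum>y\<in>N x. b x y * (g x * ((1 - t) * A x y + t * B x y)))
        = (\<Sum>y\<in>N x. (g x * (1 - t) / fa x) * (b x y * fa y) + (g x * t / fb x) * (b x y * fb y))"
      by (rule sum.cong) (use fap[of x] fbp[of x] in \<open>simp_all add: A_def B_def field_simps\<close>)
    also have "\<dots> = (g x * (1 - t) / fa x) * (\<Sum>y\<in>N x. b x y * fa y) + (g x * t / fb x) * (\<Sum>y\<in>N x. b x y * fb y)"
      by (simp add: sum.distrib sum_distrib_left)
    also have "\<dots> = g x * (V x - \<mu>)"
      unfolding Sa Sb \<mu>_def using fap[of x] fbp[of x] by (simp add: field_simps)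
    finally show ?thesis .
  qed
  have gsub: "\<mu> * g x \<le> opH b c g x" for x
  proof -
    have "(\<Sum>y\<in>N x. b x y * g y) \<le> (\<Sum>y\<in>N x. b x y * (g x * ((1 - t) * A x y + t * B x y)))"
      by (rule sum_mono) (rule termle)
    then show ?thesis unfolding sumR opH_eq by (simp add: algebra_simps)
  qed
  have C: "\<mu> \<le> Lg \<and> (\<mu> = Lg \<longrightarrow> (\<forall>x. opH b c g x = \<mu> * g x))"
    by (rule compare[OF fgM[folded \<gamma>_def] gM fgp gp fge gsub])
  show ?thesis
  proof (rule ccontr)
    assume "\<not> (1 - t) * La + t * Lb < Lg"
    then have eq: "\<mu> = Lg" using C by (simp add: \<mu>_def)
    then have gE: "opH b c g x = \<mu> * g x" for x using C by blast
    have ABeq: "A u v = B u v" if v: "v \<in> N u" for u v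
    proof (rule ccontr)
      assume ne: "A u v \<noteq> B u v"
      have "A u v powr (1 - t) * B u v powr t < (1 - t) * A u v + t * B u v"
        by (rule young_strict) (use ABpos t0 t1 ne in auto)
      then have "g v < g u * ((1 - t) * A u v + t * B u v)"
        unfolding gratio[of v u] using gp[of u] by simp
      then have lt: "b u v * g v < b u v * (g u * ((1 - t) * A u v + t * B u v))"
        using v by (simp add: N_def)
      have "(\<Sum>y\<in>N u. b u y * g y) < (\<Sum>y\<in>N u. b u y * (g u * ((1 - t) * A u y + t * B u y)))"
        by (rule sum_strict_mono_ex1[OF finN]) (use termle v lt in blast)+
      then have "\<mu> * g u < opH b c g u" unfolding sumR opH_eq by (simp add: algebra_simps)
      then show False using gE[of u] by simp
    qed
    have prp: "fa v / fb v = fa x0 / fb x0" if "fa u / fb u = fa x0 / fb x0" "v \<in> N u" for u v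
    proof -
      have h: "fa v / fa u = fb v / fb u" using ABeq[OF that(2)] by (simp add: A_def B_def)
      have nz: "fa u \<noteq> 0" "fb u \<noteq> 0" "fb v \<noteq> 0" using fap[of u] fbp[of u] fbp[of v] by auto
      have "fa v * fb u = fb v * fa u"
        using h by (simp add: frac_eq_eq nz)
      then have "fa v / fb v = fa u / fb u"
        by (simp add: frac_eq_eq nz mult.commute)
      then show ?thesis using that(1) by simp
    qed
    have allq: "fa y / fb y = fa x0 / fb x0" for y
    proof (rule reach[of "\<lambda>u. fa u / fb u = fa x0 / fb x0" x0])
      show "fa x0 / fb x0 = fa x0 / fb x0" by simp
    next
      fix u v assume "fa u / fb u = fa x0 / fb x0" "v \<in> N u"
      then show "fa v / fb v = fa x0 / fb x0" by (rule prp)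
    qed
    have "pair_Zd \<alpha> z = pair_Zd \<beta> z" for z
    proof -
      have "fa (act z x0) / fb (act z x0) = fa x0 / fb x0" by (rule allq)
      then have e: "exp (pair_Zd \<alpha> z) * fa x0 / (exp (pair_Zd \<beta> z) * fb x0) = fa x0 / fb x0"
        using faM fbM by (simp add: Mul_def)
      have nz: "exp (pair_Zd \<beta> z) * fb x0 \<noteq> 0" "fb x0 \<noteq> 0" using fbp[of x0] by auto
      have "exp (pair_Zd \<alpha> z) * fa x0 * fb x0 = fa x0 * (exp (pair_Zd \<beta> z) * fb x0)"
        using e by (simp add: frac_eq_eq nz)
      then have "exp (pair_Zd \<alpha> z) * (fa x0 * fb x0) = exp (pair_Zd \<beta> z) * (fa x0 * fb x0)"
        by (simp add: algebra_simps)
      moreover have "fa x0 * fb x0 \<noteq> 0" using fap[of x0] fbp[of x0] by simp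
      ultimately have "exp (pair_Zd \<alpha> z) = exp (pair_Zd \<beta> z)" by simp
      then show ?thesis by simp
    qed
    then have "\<alpha> $ i = \<beta> $ i" for i using pair_unit[of \<alpha> i] pair_unit[of \<beta> i] by metis
    then have "\<alpha> = \<beta>" by (simp add: vec_eq_iff)
    then show False using ab by simp
  qed
qed

end


lemma pair_uniq: "(\<And>z. pair_Zd \<alpha> z = pair_Zd \<beta> z) \<Longrightarrow> \<alpha> = \<beta>"
proof -
  assume h: "\<And>z. pair_Zd \<alpha> z = pair_Zd \<beta> z"
  have "\<alpha> $ i = \<beta> $ i" for i using h pair_unit[of \<alpha> i] pair_unit[of \<beta> i] by metis
  then show ?thesis by (simp add: vec_eq_iff)
qed

lemma char_linear:
  fixes \<gamma> :: "int ^ 'd \<Rightarrow> real"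
  assumes "is_character \<gamma>"
  shows "\<exists>\<alpha>. \<forall>z. ln (\<gamma> z) = pair_Zd \<alpha> z"
proof -
  define L where "L z = ln (\<gamma> z)" for z
  have pos: "0 < \<gamma> z" for z using assms by (simp add: is_character_def)
  have mul: "\<gamma> (z + w) = \<gamma> z * \<gamma> w" for z w using assms by (simp add: is_character_def)
  have Ladd: "L (z + w) = L z + L w" for z w
  proof -
    have "\<gamma> z \<noteq> 0" "\<gamma> w \<noteq> 0" using pos[of z] pos[of w] by auto
    then show ?thesis by (simp add: L_def mul ln_mult)
  qed
  have L0: "L 0 = 0" using Ladd[of 0 0] by simp
  have Lneg: "L (- z) = - L z" for z using Ladd[of z "- z"] L0 by simp
  have Lsum: "L (sum f A) = (\<Sum>a\<in>A. L (f a))" for f :: "'d \<Rightarrow> int ^ 'd" and A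
  proof (cases "finite A")
    case True then show ?thesis by (induction A rule: finite_induct) (simp_all add: L0 Ladd)
  next
    case False then show ?thesis by (simp add: L0)
  qed
  define u :: "'d \<Rightarrow> int \<Rightarrow> int ^ 'd" where "u i k = (\<chi> j. if j = i then k else 0)" for i k
  have unat: "L (u i (int n)) = real n * L (u i 1)" for i n
  proof (induction n)
    case 0
    have "u i 0 = 0" by (simp add: u_def vec_eq_iff)
    then show ?case by (simp add: L0)
  next
    case (Suc n)
    have "u i (int (Suc n)) = u i (int n) + u i 1" by (simp add: u_def vec_eq_iff)
    then show ?case using Suc by (simp add: Ladd algebra_simps)
  qed
  have uint: "L (u i k) = real_of_int k * L (u i 1)" for i k
  proof (cases "0 \<le> k")
    case True
    then have "k = int (nat k)" by simp
    then show ?thesis using unat[of i "nat k"] by (metis of_int_of_nat_eq)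
  next
    case False
    define m where "m = nat (- k)"
    have km: "k = - int m" using False by (simp add: m_def)
    have "u i k = - u i (int m)" by (simp add: km u_def vec_eq_iff)
    then have "L (u i k) = - L (u i (int m))" by (simp add: Lneg)
    also have "\<dots> = - (real m * L (u i 1))" by (simp add: unat)
    finally show ?thesis using km by simp
  qed
  define \<alpha> where "\<alpha> = (\<chi> i. L (u i 1))"
  have "ln (\<gamma> z) = pair_Zd \<alpha> z" for z
  proof -
    have zdec: "z = (\<Sum>i\<in>UNIV. u i (z $ i))"
      by (simp add: vec_eq_iff u_def if_distrib cong: if_cong)
    have "ln (\<gamma> z) = L (\<Sum>i\<in>UNIV. u i (z $ i))" using zdec L_def by metis
    also have "\<dots> = (\<Sum>i\<in>UNIV. L (u i (z $ i)))" by (rule Lsum)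
    also have "\<dots> = pair_Zd \<alpha> z"
      unfolding pair_Zd_def by (rule sum.cong[OF refl]) (subst uint, simp add: \<alpha>_def mult.commute)
    finally show ?thesis .
  qed
  then show ?thesis by blast
qed

context setting begin

lemma Kset_props:
  assumes "f \<in> Kset b c x0 lam"
  shows "(\<forall>x. 0 \<le> f x) \<and> f x0 = 1 \<and> (\<forall>x. opH b c f x = lam * f x)"
proof -
  define C where "C = {f :: 'x \<Rightarrow> real. (\<forall>x. 0 \<le> f x) \<and> f x0 = 1 \<and>
      (\<forall>x. V x * f x - (\<Sum>y\<in>N x. b x y * f y) = lam * f x)}"
  have "closed C"
    unfolding C_def
  proof (intro closed_Collect_conj closed_Collect_all)
    fix x
    show "closed {f :: 'x \<Rightarrow> real. 0 \<le> f x}"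
      by (intro closed_Collect_le continuous_on_const continuous_on_product_coordinates)
    show "closed {f :: 'x \<Rightarrow> real. V x * f x - (\<Sum>y\<in>N x. b x y * f y) = lam * f x}"
      by (intro closed_Collect_eq continuous_on_diff continuous_on_mult_left continuous_on_sum
          continuous_on_product_coordinates)
  next
    show "closed {f :: 'x \<Rightarrow> real. f x0 = 1}"
      by (intro closed_Collect_eq continuous_on_const continuous_on_product_coordinates)
  qed
  moreover have "{f. (\<forall>x. f x \<ge> 0) \<and> f \<noteq> (\<lambda>_. 0) \<and> harmonic b c lam f \<and> f x0 = 1} \<subseteq> C"
    by (auto simp: C_def harmonic_def opH_eq)
  ultimately have "Kset b c x0 lam \<subseteq> C" unfolding Kset_def by (rule closure_minimal[rotated])
  then show ?thesis using assms by (auto simp: C_def opH_eq)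
qed

lemma in_Kset:
  assumes "\<And>x. 0 \<le> f x" "f x0 = 1" "\<And>x. opH b c f x = lam * f x"
  shows "f \<in> Kset b c x0 lam"
proof -
  have nz: "f \<noteq> (\<lambda>_. 0)"
  proof
    assume "f = (\<lambda>_. 0)"
    then have "f x0 = 0" by simp
    then show False using assms(2) by simp
  qed
  have h: "harmonic b c lam f" unfolding harmonic_def
  proof
    show "f \<in> domH b" by (rule domH_all)
    show "\<forall>x. opH b c f x - lam * f x = 0" using assms(3) by simp
  qed
  have "f \<in> {f. (\<forall>x. f x \<ge> 0) \<and> f \<noteq> (\<lambda>_. 0) \<and> harmonic b c lam f \<and> f x0 = 1}"
    unfolding mem_Collect_eq
  proof (intro conjI)
    show "\<forall>x. 0 \<le> f x" using assms(1) by simp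
    show "f \<noteq> (\<lambda>_. 0)" by (rule nz)
    show "harmonic b c lam f" by (rule h)
    show "f x0 = 1" by (rule assms(2))
  qed
  then show ?thesis unfolding Kset_def by (rule subsetD[OF closure_subset])
qed

lemma mw: "f \<in> Mul \<alpha> \<Longrightarrow> mult_with act (\<lambda>z. exp (pair_Zd \<alpha> z)) f"
  by (simp add: mult_with_def is_character_def Mul_def pair_add exp_add)

lemma mw_uniq: "mult_with act \<gamma> f \<Longrightarrow> f x0 = 1 \<Longrightarrow> \<gamma> = (\<lambda>z. f (act z x0))"
  by (simp add: mult_with_def fun_eq_iff)

lemma char_of_eq: "mult_with act \<gamma> f \<Longrightarrow> f x0 = 1 \<Longrightarrow> char_of act f = \<gamma>"
  unfolding char_of_def
  by (rule the_equality) (auto dest: mw_uniq)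

lemma rho_eq: "(\<And>z. ln (char_of act f z) = pair_Zd \<alpha> z) \<Longrightarrow> rho act f = \<alpha>"
  unfolding rho_def
  by (rule the_equality) (auto intro: pair_uniq)

lemma opH_scale: "opH b c (\<lambda>x. a * g x) x = a * opH b c g x"
proof -
  have "(\<Sum>y\<in>N x. b x y * (a * g y)) = a * (\<Sum>y\<in>N x. b x y * g y)"
    by (simp add: sum_distrib_left mult.left_commute)
  then show ?thesis by (simp add: opH_eq algebra_simps)
qed

lemma Mset_Mul:
  assumes "f \<in> Mset b c act x0 lam"
  shows "f \<in> Mul (rho act f) \<and> (\<forall>x. 0 < f x) \<and> (\<forall>x. opH b c f x = lam * f x)"
proof -
  have K: "f \<in> Kset b c x0 lam" and m: "multiplicative act f" using assms by (auto simp: Mset_def)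
  note P = Kset_props[OF K]
  obtain \<gamma> where g: "mult_with act \<gamma> f" using m by (auto simp: multiplicative_def)
  then have ch: "is_character \<gamma>" by (simp add: mult_with_def)
  obtain \<alpha> where a: "\<And>z. ln (\<gamma> z) = pair_Zd \<alpha> z" using char_linear[OF ch] by blast
  have co: "char_of act f = \<gamma>" using char_of_eq[OF g] P by simp
  have r: "rho act f = \<alpha>" by (rule rho_eq) (simp add: co a)
  have "f \<in> Mul \<alpha>"
    unfolding Mul_def
  proof (intro CollectI allI)
    fix z x
    have "\<gamma> z = exp (pair_Zd \<alpha> z)" using a[of z] ch by (metis exp_ln is_character_def)
    then show "f (act z x) = exp (pair_Zd \<alpha> z) * f x" using g by (simp add: mult_with_def)
  qed
  moreover have "\<forall>x. 0 < f x" using pos_harm[of f lam] P by blast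
  ultimately show ?thesis using r P by simp
qed

lemma Lam_eq:
  assumes gM: "g \<in> Mul \<alpha>" and gp: "\<And>x. 0 < g x" and ge: "\<And>x. opH b c g x = L * g x"
  shows "Lam b c act x0 \<alpha> = L"
proof -
  define f where "f x = (1 / g x0) * g x" for x
  have fM: "f \<in> Mul \<alpha>"
  proof -
    have "(\<lambda>x. (1 / g x0) * g x + 0 * g x) \<in> Mul \<alpha>" by (rule Mul_lin[OF gM gM])
    then show ?thesis by (simp add: f_def[abs_def])
  qed
  have f1: "f x0 = 1" using gp[of x0] by (simp add: f_def)
  have fp: "0 < f x" for x using gp[of x] gp[of x0] by (simp add: f_def)
  have fe: "opH b c f x = L * f x" for x unfolding f_def[abs_def] opH_scale ge by simp
  have fK: "f \<in> Mset b c act x0 L"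
    unfolding Mset_def multiplicative_def
    using in_Kset[of f L] fp fe f1 mw[OF fM] by (auto intro: less_imp_le)
  have fr: "rho act f = \<alpha>"
    by (rule rho_eq) (simp add: char_of_eq[OF mw[OF fM] f1])
  show ?thesis
    unfolding Lam_def
  proof (rule the_equality)
    show "\<exists>f\<in>Mset b c act x0 L. rho act f = \<alpha>" using fK fr by blast
  next
    fix lam assume "\<exists>f\<in>Mset b c act x0 lam. rho act f = \<alpha>"
    then obtain f' where f': "f' \<in> Mset b c act x0 lam" "rho act f' = \<alpha>" by blast
    note P = Mset_Mul[OF f'(1)]
    have f'M: "f' \<in> Mul \<alpha>" using P f'(2) by simp
    have "lam \<le> L"
      using compare[OF fM f'M fp _ fe, of lam] P by simp
    moreover have "L \<le> lam"
      using compare[OF f'M fM _ fp _, of lam L] P fe by simp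
    ultimately show "lam = L" by simp
  qed
qed

lemma exists_L: "\<exists>g L. g \<in> Mul \<alpha> \<and> (\<forall>x. 0 < g x) \<and> (\<forall>x. opH b c g x = L * g x)"
proof -
  obtain g r where g: "g \<in> Mul \<alpha>" "\<forall>x. 0 < g x" "\<forall>x. Tm g x = r * g x" using exist_eig by blast
  have "opH b c g x = (sC - r) * g x" for x using g(3) by (simp add: opH_Tm algebra_simps)
  then show ?thesis using g by blast
qed

lemma main: "strictly_concave_on UNIV (Lam b c act x0) \<and> continuous_on UNIV (Lam b c act x0)"
proof -
  have sc: "(1 - t) * Lam b c act x0 \<alpha> + t * Lam b c act x0 \<beta> < Lam b c act x0 ((1 - t) *\<^sub>R \<alpha> + t *\<^sub>R \<beta>)"
    if "\<alpha> \<noteq> \<beta>" "0 < t" "t < 1" for \<alpha> \<beta> t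
  proof -
    obtain ga La where a: "ga \<in> Mul \<alpha>" "\<forall>x. 0 < ga x" "\<forall>x. opH b c ga x = La * ga x"
      using exists_L by blast
    obtain gb Lb where b': "gb \<in> Mul \<beta>" "\<forall>x. 0 < gb x" "\<forall>x. opH b c gb x = Lb * gb x"
      using exists_L by blast
    obtain gg Lg where g: "gg \<in> Mul ((1 - t) *\<^sub>R \<alpha> + t *\<^sub>R \<beta>)" "\<forall>x. 0 < gg x" "\<forall>x. opH b c gg x = Lg * gg x"
      using exists_L by blast
    have "(1 - t) * La + t * Lb < Lg"
      by (rule concave_core[OF a(1) _ _ b'(1) _ _ g(1)]) (use a b' g that in auto)
    moreover have "Lam b c act x0 \<alpha> = La" by (rule Lam_eq) (use a in auto)
    moreover have "Lam b c act x0 \<beta> = Lb" by (rule Lam_eq) (use b' in auto)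
    moreover have "Lam b c act x0 ((1 - t) *\<^sub>R \<alpha> + t *\<^sub>R \<beta>) = Lg" by (rule Lam_eq) (use g in auto)
    ultimately show ?thesis by simp
  qed
  have cv: "convex_on UNIV (\<lambda>\<alpha>. - Lam b c act x0 \<alpha>)"
  proof (rule convex_onI)
    fix t :: real and \<alpha> \<beta> :: "real ^ 'd"
    assume t: "0 < t" "t < 1"
    show "- Lam b c act x0 ((1 - t) *\<^sub>R \<alpha> + t *\<^sub>R \<beta>) \<le> (1 - t) * - Lam b c act x0 \<alpha> + t * - Lam b c act x0 \<beta>"
    proof (cases "\<alpha> = \<beta>")
      case True
      then have "(1 - t) *\<^sub>R \<alpha> + t *\<^sub>R \<beta> = \<alpha>" by (simp add: algebra_simps)
      then show ?thesis using True by (simp add: algebra_simps)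
    next
      case False
      then show ?thesis using sc[OF False t] by simp
    qed
  qed simp
  have "continuous_on UNIV (\<lambda>\<alpha>. - Lam b c act x0 \<alpha>)" by (rule convex_on_continuous[OF open_UNIV cv])
  then have "continuous_on UNIV (\<lambda>\<alpha>. - (- Lam b c act x0 \<alpha>))" by (rule continuous_on_minus)
  then have "continuous_on UNIV (Lam b c act x0)" by simp
  moreover have "strictly_concave_on UNIV (Lam b c act x0)"
    unfolding strictly_concave_on_def using sc by blast
  ultimately show ?thesis by simp
qed

end

theorem lemma13:
  fixes b :: "'x::countable \<Rightarrow> 'x \<Rightarrow> real" and c :: "'x \<Rightarrow> real"
    and act :: "int ^ 'd \<Rightarrow> 'x \<Rightarrow> 'x" and x0 :: 'x
  assumes "graph b" and "locally_finite b" and "graph_connected b"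
    and "group_action act" and "free_action act" and "cocompact_action act"
    and "H_invariant b c act"
  shows "strictly_concave_on UNIV (Lam b c act x0) \<and> continuous_on UNIV (Lam b c act x0)"
proof -
  interpret setting b c act x0 using assms by unfold_locales
  show ?thesis by (rule main)
qed


end
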